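(* Let $\{\Lambda_c^{(n)}\}$ be a sequence of lattices, $\Lambda_c^{(n)}\subset\mathbb{R}^n$, that is good for MSE quantization, and let $\mathcal{V}_c^{(n)}$ be the Voronoi region of $\Lambda_c^{(n)}$. Then the sequence of random vectors $\mathbf{U}^{(n)}\sim\mathrm{Unif}(\mathcal{V}^{(n)}_c)$ is semi norm-ergodic.
   Context: For a lattice $\Lambda\subset\mathbb{R}^n$: the Voronoi region $\mathcal{V}$ is the set of points whose nearest lattice point (ties broken systematically) is $\mathbf{0}$; $V(\Lambda)$ is its volume; $\sigma^2(\Lambda)=\frac1n\mathbb{E}\|\mathbf{U}\|^2$ for $\mathbf{U}$ uniform on $\mathcal{V}$; $G(\Lambda)=\sigma^2(\Lambda)/V(\Lambda)^{2/n}$. A sequence $\Lambda^{(n)}$ is good for MSE quantization if $\lim_{n\to\infty}G(\Lambda^{(n)})=\frac{1}{2\pi e}$. A sequence of random vectors $\mathbf{Z}^{(n)}\in\mathbb{R}^n$ with effective variance $\sigma^2_{\mathbf{Z}^{(n)}}=\frac1n\mathbb{E}\|\mathbf{Z}^{(n)}\|^2<\infty$ is semi norm-ergodic if for every $\epsilon>0,\delta>0$ and all $n$ large enough, $\Pr\big(\|\mathbf{Z}^{(n)}\|>\sqrt{(1+\delta)n\sigma^2_{\mathbf{Z}^{(n)}}}\big)\le\epsilon$. *)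

theory Defs
  imports "HOL-Probability.Probability"
begin

text \<open>Points of R^n are represented as functions nat => real that are extensional on
  the index set {..<n}, i.e. elements of the space of the product Lebesgue measure
  PiM {..<n} (%_. lborel).\<close>

definition Rn :: "nat \<Rightarrow> (nat \<Rightarrow> real) measure" where
  "Rn n = PiM {..<n} (\<lambda>_. lborel)"

definition vnorm :: "nat \<Rightarrow> (nat \<Rightarrow> real) \<Rightarrow> real" where
  "vnorm n x = sqrt (\<Sum>i<n. (x i)\<^sup>2)"

definition vdiff :: "nat \<Rightarrow> (nat \<Rightarrow> real) \<Rightarrow> (nat \<Rightarrow> real) \<Rightarrow> (nat \<Rightarrow> real)" where
  "vdiff n x y = (\<lambda>i\<in>{..<n}. x i - y i)"

definition is_lattice :: "nat \<Rightarrow> (nat \<Rightarrow> real) set \<Rightarrow> bool" where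
  "is_lattice n L \<longleftrightarrow>
     (\<exists>G :: nat \<Rightarrow> nat \<Rightarrow> real.
        (\<forall>c :: nat \<Rightarrow> real. (\<forall>i<n. (\<Sum>j<n. c j * G j i) = 0) \<longrightarrow> (\<forall>j<n. c j = 0)) \<and>
        L = {x. \<exists>z :: nat \<Rightarrow> real. (\<forall>j<n. z j \<in> \<int>) \<and>
                  x = (\<lambda>i\<in>{..<n}. \<Sum>j<n. z j * G j i)})"

text \<open>V is a Voronoi region of L (for some systematic tie-breaking rule): it contains every
  point strictly closer to 0 than to any other lattice point, and every point of V has 0
  as a nearest lattice point; V is measurable.\<close>
definition voronoi_region :: "nat \<Rightarrow> (nat \<Rightarrow> real) set \<Rightarrow> (nat \<Rightarrow> real) set \<Rightarrow> bool" where
  "voronoi_region n L V \<longleftrightarrow>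
     V \<in> sets (Rn n) \<and>
     {x \<in> space (Rn n). \<forall>l\<in>L - {\<lambda>i\<in>{..<n}. 0}. vnorm n x < vnorm n (vdiff n x l)} \<subseteq> V \<and>
     V \<subseteq> {x \<in> space (Rn n). \<forall>l\<in>L. vnorm n x \<le> vnorm n (vdiff n x l)}"

definition vol :: "nat \<Rightarrow> (nat \<Rightarrow> real) set \<Rightarrow> real" where
  "vol n V = measure (Rn n) V"

definition eff_var :: "nat \<Rightarrow> (nat \<Rightarrow> real) measure \<Rightarrow> real" where
  "eff_var n P = (1 / real n) * (\<integral>x. (vnorm n x)\<^sup>2 \<partial>P)"

definition sigma2 :: "nat \<Rightarrow> (nat \<Rightarrow> real) set \<Rightarrow> real" where
  "sigma2 n V = eff_var n (uniform_measure (Rn n) V)"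

definition NSM :: "nat \<Rightarrow> (nat \<Rightarrow> real) set \<Rightarrow> real" where
  "NSM n V = sigma2 n V / (vol n V) powr (2 / real n)"

definition good_for_MSE :: "(nat \<Rightarrow> (nat \<Rightarrow> real) set) \<Rightarrow> bool" where
  "good_for_MSE V \<longleftrightarrow> (\<lambda>n. NSM n (V n)) \<longlonglongrightarrow> 1 / (2 * pi * exp 1)"

text \<open>Semi norm-ergodicity of a sequence of random vectors, expressed through their
  distributions P n on R^n (the property depends only on the distributions).\<close>
definition semi_norm_ergodic :: "(nat \<Rightarrow> (nat \<Rightarrow> real) measure) \<Rightarrow> bool" where
  "semi_norm_ergodic P \<longleftrightarrow>
     (\<forall>n. prob_space (P n) \<and> sets (P n) = sets (Rn n) \<and>
          integrable (P n) (\<lambda>x. (vnorm n x)\<^sup>2)) \<and>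
     (\<forall>\<epsilon>>0. \<forall>\<delta>>0. eventually (\<lambda>n.
        measure (P n) {x \<in> space (P n).
           vnorm n x > sqrt ((1 + \<delta>) * real n * eff_var n (P n))} \<le> \<epsilon>) sequentially)"

end

theory Submission
  imports Defs "Jordan_Normal_Form.Determinant"
begin

lemma gauss1:
  fixes s :: real assumes s: "s > 0"
  shows "(\<integral>\<^sup>+x. ennreal (exp (- s * x\<^sup>2)) \<partial>lborel) = ennreal (sqrt (pi / s))"
proof -
  define sg where "sg = sqrt (1 / (2 * s))"
  have s2: "sg\<^sup>2 = 1 / (2 * s)" using s by (simp add: sg_def)
  have eq: "\<And>x. exp (- s * x\<^sup>2) = sqrt (pi / s) * normal_density 0 sg x"
    unfolding normal_density_def s2 using s
    by (simp add: field_simps real_sqrt_divide)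
  have "(\<integral>\<^sup>+x. ennreal (normal_density 0 sg x) \<partial>lborel) = 1"
    using s by (subst nn_integral_eq_integral) (auto simp: sg_def)
  moreover have "(\<integral>\<^sup>+x. ennreal (exp (- s * x\<^sup>2)) \<partial>lborel) = ennreal (sqrt (pi / s)) * (\<integral>\<^sup>+x. ennreal (normal_density 0 sg x) \<partial>lborel)"
    unfolding eq apply (subst nn_integral_cmult[symmetric]) apply measurable apply (intro nn_integral_cong ennreal_mult) using s by auto
  ultimately show ?thesis by simp
qed

lemma vnorm_sq: "(vnorm n x)\<^sup>2 = (\<Sum>i<n. (x i)\<^sup>2)"
  unfolding vnorm_def by (rule real_sqrt_pow2, rule sum_nonneg, simp)

lemma vnorm_nonneg: "vnorm n x \<ge> 0"
  unfolding vnorm_def by (rule real_sqrt_ge_zero, rule sum_nonneg, simp)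

lemma space_Rn: "space (Rn n) = PiE {..<n} (\<lambda>_. UNIV)"
  unfolding Rn_def by (simp add: space_PiM)

lemma vnorm_meas[measurable]: "vnorm n \<in> borel_measurable (Rn n)"
  unfolding vnorm_def Rn_def by measurable

lemma ball_bound:
  assumes a: "a > 0" and n: "n > 0"
  shows "emeasure (Rn n) {x \<in> space (Rn n). (vnorm n x)\<^sup>2 \<le> a}
          \<le> ennreal ((2 * pi * exp 1 * a / n) powr (n / 2))"
proof -
  interpret product_sigma_finite "\<lambda>_. lborel :: real measure" by standard
  define s where "s = n / (2 * a)"
  have s: "s > 0" using a n by (simp add: s_def)
  let ?S = "{x \<in> space (Rn n). (vnorm n x)\<^sup>2 \<le> a}"
  have Smeas: "?S \<in> sets (Rn n)" by measurable
  have "emeasure (Rn n) ?S = (\<integral>\<^sup>+x. indicator ?S x \<partial>Rn n)"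
    using Smeas by simp
  also have "\<dots> \<le> (\<integral>\<^sup>+x. ennreal (exp (s * a)) * (\<Prod>i\<in>{..<n}. ennreal (exp (- s * (x i)\<^sup>2))) \<partial>Rn n)"
  proof (rule nn_integral_mono)
    fix x assume x: "x \<in> space (Rn n)"
    have "(\<Prod>i\<in>{..<n}. ennreal (exp (- s * (x i)\<^sup>2))) = ennreal (\<Prod>i\<in>{..<n}. exp (- s * (x i)\<^sup>2))"
      by (simp add: prod_ennreal)
    also have "(\<Prod>i\<in>{..<n}. exp (- s * (x i)\<^sup>2)) = exp (- s * (vnorm n x)\<^sup>2)"
      by (simp add: vnorm_sq exp_sum sum_distrib_left)
    finally have eq: "ennreal (exp (s * a)) * (\<Prod>i\<in>{..<n}. ennreal (exp (- s * (x i)\<^sup>2)))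
        = ennreal (exp (s * a) * exp (- s * (vnorm n x)\<^sup>2))"
      by (simp add: ennreal_mult)
    have "indicator ?S x \<le> ennreal (exp (s * a) * exp (- s * (vnorm n x)\<^sup>2))"
    proof (cases "x \<in> ?S")
      case True
      then have "s * (vnorm n x)\<^sup>2 \<le> s * a" using s by (simp add: mult_left_mono)
      then have "1 \<le> exp (s * a) * exp (- s * (vnorm n x)\<^sup>2)"
        by (simp add: exp_add[symmetric])
      then show ?thesis using True by simp
    qed simp
    then show "indicator ?S x \<le> ennreal (exp (s * a)) * (\<Prod>i\<in>{..<n}. ennreal (exp (- s * (x i)\<^sup>2)))"
      using eq by simp
  qed
  also have "\<dots> = ennreal (exp (s * a)) * (\<integral>\<^sup>+x. (\<Prod>i\<in>{..<n}. ennreal (exp (- s * (x i)\<^sup>2))) \<partial>Rn n)"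
    unfolding Rn_def by (rule nn_integral_cmult) measurable
  also have "(\<integral>\<^sup>+x. (\<Prod>i\<in>{..<n}. ennreal (exp (- s * (x i)\<^sup>2))) \<partial>Rn n)
      = (\<Prod>i\<in>{..<n}. (\<integral>\<^sup>+y. ennreal (exp (- s * y\<^sup>2)) \<partial>lborel))"
    unfolding Rn_def
    by (rule product_nn_integral_prod[where f="\<lambda>i y. ennreal (exp (- s * y\<^sup>2))"]) auto
  also have "\<dots> = ennreal (sqrt (pi / s) ^ n)"
    using gauss1[OF s] s by (simp add: prod_ennreal ennreal_power[symmetric])
  also have "ennreal (exp (s * a)) * ennreal (sqrt (pi / s) ^ n) = ennreal (exp (s * a) * sqrt (pi / s) ^ n)"
    using s by (intro ennreal_mult[symmetric]) auto
  also have "exp (s * a) * sqrt (pi / s) ^ n = (2 * pi * exp 1 * a / n) powr (n / 2)"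
  proof -
    have e1: "exp (s * a) = exp 1 powr (n / 2)"
      using a by (simp add: s_def powr_def)
    have e2: "sqrt (pi / s) ^ n = (pi / s) powr (n / 2)"
      using s by (simp add: powr_half_sqrt[symmetric] powr_realpow[symmetric] powr_powr)
    have e3: "pi / s = 2 * pi * a / n" using a n by (simp add: s_def)
    have "exp (s * a) * sqrt (pi / s) ^ n = exp 1 powr (n / 2) * (pi / s) powr (n / 2)"
      using e1 e2 by simp
    also have "\<dots> = (exp 1 * (pi / s)) powr (n / 2)"
      using s by (subst powr_mult) auto
    also have "exp 1 * (pi / s) = 2 * pi * exp 1 * a / n" using e3 by simp
    finally show ?thesis .
  qed
  finally show ?thesis .
qed

lemma inv_exists:
  fixes G :: "nat \<Rightarrow> nat \<Rightarrow> real"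
  assumes indep: "\<forall>c :: nat \<Rightarrow> real. (\<forall>i<n. (\<Sum>j<n. c j * G j i) = 0) \<longrightarrow> (\<forall>j<n. c j = 0)"
  shows "\<exists>a :: nat \<Rightarrow> nat \<Rightarrow> real. \<forall>i<n. \<forall>k<n. (\<Sum>j<n. G j i * a j k) = (if i = k then 1 else 0)"
proof -
  define M :: "real mat" where "M = mat n n (\<lambda>(i,j). G j i)"
  have M: "M \<in> carrier_mat n n" by (simp add: M_def)
  have "det M \<noteq> 0"
  proof
    assume "det M = 0"
    then obtain v where v: "v \<in> carrier_vec n" "v \<noteq> 0\<^sub>v n" "M *\<^sub>v v = 0\<^sub>v n"
      using det_0_iff_vec_prod_zero[OF M] by blast
    have "\<forall>i<n. (\<Sum>j<n. v $ j * G j i) = 0"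
    proof (intro allI impI)
      fix i assume i: "i < n"
      have "(M *\<^sub>v v) $ i = 0" using v(3) i by simp
      then show "(\<Sum>j<n. v $ j * G j i) = 0"
        using i v(1) by (simp add: M_def mult_mat_vec_def scalar_prod_def lessThan_atLeast0 mult.commute)
    qed
    then have "\<forall>j<n. v $ j = 0" using indep by blast
    then have "v = 0\<^sub>v n" using v(1) by (intro eq_vecI) auto
    then show False using v(2) by simp
  qed
  then have "M \<in> Units (ring_mat TYPE(real) n undefined)"
    by (rule det_non_zero_imp_unit[OF M])
  then obtain B where B: "B \<in> carrier_mat n n" "M * B = 1\<^sub>m n"
    unfolding Units_def ring_mat_def by auto
  show ?thesis
  proof (intro exI allI impI)
    fix i k assume ik: "i < n" "k < n"
    have "(M * B) $$ (i, k) = (\<Sum>j<n. G j i * B $$ (j, k))"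
      using ik B(1) by (simp add: M_def scalar_prod_def lessThan_atLeast0)
    then show "(\<Sum>j<n. G j i * B $$ (j, k)) = (if i = k then 1 else 0)"
      using B(2) ik by simp
  qed
qed

lemma vnorm_L2: "vnorm n x = L2_set x {..<n}"
  unfolding vnorm_def L2_set_def by simp

lemma vnorm_cong: "(\<And>i. i < n \<Longrightarrow> x i = y i) \<Longrightarrow> vnorm n x = vnorm n y"
  unfolding vnorm_def by (intro arg_cong[where f=sqrt] sum.cong) auto

lemma comp_le_vnorm: "k < n \<Longrightarrow> \<bar>x k\<bar> \<le> vnorm n x"
  unfolding vnorm_def
  by (rule real_le_rsqrt) (simp, intro member_le_sum[where f="\<lambda>i. (x i)\<^sup>2"], auto)

lemma vnorm_le_sum_abs: "vnorm n x \<le> (\<Sum>i<n. \<bar>x i\<bar>)"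
  unfolding vnorm_L2 by (rule L2_set_le_sum_abs)

lemma vnorm_triangle: "vnorm n (\<lambda>i. x i + y i) \<le> vnorm n x + vnorm n y"
  unfolding vnorm_L2 by (rule L2_set_triangle_ineq)

lemma lattice_props:
  assumes "is_lattice n L"
  shows "(\<exists>lam>0. \<forall>l\<in>L - {\<lambda>i\<in>{..<n}. 0}. vnorm n l \<ge> lam) \<and>
         (\<exists>R. \<forall>x\<in>space (Rn n). \<exists>l\<in>L. vnorm n (vdiff n x l) \<le> R)"
proof -
  obtain G :: "nat \<Rightarrow> nat \<Rightarrow> real" where
    indep: "\<forall>c :: nat \<Rightarrow> real. (\<forall>i<n. (\<Sum>j<n. c j * G j i) = 0) \<longrightarrow> (\<forall>j<n. c j = 0)" and
    L: "L = {x. \<exists>z :: nat \<Rightarrow> real. (\<forall>j<n. z j \<in> \<int>) \<and> x = (\<lambda>i\<in>{..<n}. \<Sum>j<n. z j * G j i)}"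
    using assms unfolding is_lattice_def by blast
  obtain a where a: "\<forall>i<n. \<forall>k<n. (\<Sum>j<n. G j i * a j k) = (if i = k then 1 else 0)"
    using inv_exists[OF indep] by blast
  have repr: "(\<Sum>j<n. (\<Sum>k<n. a j k * y k) * G j i) = y i" if i: "i < n" for y i
  proof -
    have "(\<Sum>j<n. (\<Sum>k<n. a j k * y k) * G j i) = (\<Sum>k<n. y k * (\<Sum>j<n. G j i * a j k))"
    proof -
      have "(\<Sum>j<n. (\<Sum>k<n. a j k * y k) * G j i) = (\<Sum>j<n. \<Sum>k<n. a j k * y k * G j i)"
        by (simp add: sum_distrib_right)
      also have "\<dots> = (\<Sum>k<n. \<Sum>j<n. a j k * y k * G j i)"
        by (rule sum.swap)
      also have "\<dots> = (\<Sum>k<n. y k * (\<Sum>j<n. G j i * a j k))"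
        by (simp add: sum_distrib_left mult_ac)
      finally show ?thesis .
    qed
    also have "\<dots> = (\<Sum>k<n. if k = i then y k else 0)"
      using a i by (intro sum.cong) auto
    also have "\<dots> = y i" using i by simp
    finally show ?thesis .
  qed
  define K where "K = 1 + (\<Sum>j<n. \<Sum>k<n. \<bar>a j k\<bar>)"
  have K: "K \<ge> 1" unfolding K_def by (simp add: sum_nonneg)
  have disc: "vnorm n l \<ge> 1 / K" if l: "l \<in> L - {\<lambda>i\<in>{..<n}. 0}" for l
  proof -
    obtain z where z: "\<forall>j<n. z j \<in> \<int>" and lz: "l = (\<lambda>i\<in>{..<n}. \<Sum>j<n. z j * G j i)"
      using l L by blast
    have "\<exists>j<n. z j \<noteq> 0"
    proof (rule ccontr)
      assume "\<not> ?thesis"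
      then have "l = (\<lambda>i\<in>{..<n}. 0)" unfolding lz by (intro ext) auto
      then show False using l by blast
    qed
    then obtain j where j: "j < n" "z j \<noteq> 0" by blast
    define t where "t j = (\<Sum>k<n. a j k * l k)" for j
    have "\<forall>i<n. (\<Sum>j<n. (t j - z j) * G j i) = 0"
    proof (intro allI impI)
      fix i assume i: "i < n"
      have "(\<Sum>j<n. (t j - z j) * G j i) = (\<Sum>j<n. t j * G j i) - (\<Sum>j<n. z j * G j i)"
        by (simp add: left_diff_distrib sum_subtractf)
      also have "(\<Sum>j<n. t j * G j i) = l i" unfolding t_def using repr[OF i] .
      also have "(\<Sum>j<n. z j * G j i) = l i" using i lz by simp
      finally show "(\<Sum>j<n. (t j - z j) * G j i) = 0" by simp
    qed
    then have "\<forall>j<n. t j - z j = 0" using indep[rule_format, of "\<lambda>j. t j - z j"] by blast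
    then have tz: "t j = z j" using j(1) by simp
    obtain m where m: "z j = of_int m" using z j(1) Ints_cases by blast
    have "1 \<le> \<bar>z j\<bar>" using j(2) m by simp
    also have "\<bar>z j\<bar> = \<bar>\<Sum>k<n. a j k * l k\<bar>" using tz t_def by simp
    also have "\<dots> \<le> (\<Sum>k<n. \<bar>a j k\<bar> * vnorm n l)"
      by (rule order_trans[OF sum_abs]) (auto simp: abs_mult intro!: sum_mono mult_left_mono comp_le_vnorm)
    also have "\<dots> = (\<Sum>k<n. \<bar>a j k\<bar>) * vnorm n l" by (simp add: sum_distrib_right)
    also have "\<dots> \<le> K * vnorm n l"
    proof (rule mult_right_mono[OF _ vnorm_nonneg])
      have "(\<Sum>k<n. \<bar>a j k\<bar>) \<le> (\<Sum>j<n. \<Sum>k<n. \<bar>a j k\<bar>)"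
        using j(1) by (intro member_le_sum[where f="\<lambda>j. \<Sum>k<n. \<bar>a j k\<bar>"]) (auto simp: sum_nonneg)
      then show "(\<Sum>k<n. \<bar>a j k\<bar>) \<le> K" unfolding K_def by simp
    qed
    finally show ?thesis using K by (simp add: field_simps)
  qed
  define R where "R = (\<Sum>i<n. \<Sum>j<n. \<bar>G j i\<bar>)"
  have bnd: "\<exists>l\<in>L. vnorm n (vdiff n x l) \<le> R" if x: "x \<in> space (Rn n)" for x
  proof -
    define t where "t j = (\<Sum>k<n. a j k * x k)" for j
    define z where "z j = real_of_int (round (t j))" for j
    define l where "l = (\<lambda>i\<in>{..<n}. \<Sum>j<n. z j * G j i)"
    have lL: "l \<in> L" unfolding L l_def by (rule CollectI, rule exI[of _ z]) (auto simp: z_def)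
    have comp: "vdiff n x l i = (\<Sum>j<n. (t j - z j) * G j i)" if i: "i < n" for i
    proof -
      have "vdiff n x l i = x i - (\<Sum>j<n. z j * G j i)" using i by (simp add: vdiff_def l_def)
      also have "x i = (\<Sum>j<n. t j * G j i)" unfolding t_def using repr[OF i] by simp
      finally show ?thesis by (simp add: left_diff_distrib sum_subtractf)
    qed
    have "vnorm n (vdiff n x l) \<le> (\<Sum>i<n. \<bar>vdiff n x l i\<bar>)" by (rule vnorm_le_sum_abs)
    also have "\<dots> \<le> R" unfolding R_def
    proof (rule sum_mono)
      fix i assume "i \<in> {..<n}"
      then have i: "i < n" by simp
      have "\<bar>vdiff n x l i\<bar> \<le> (\<Sum>j<n. \<bar>(t j - z j) * G j i\<bar>)" unfolding comp[OF i] by (rule sum_abs)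
      also have "\<dots> \<le> (\<Sum>j<n. \<bar>G j i\<bar>)"
      proof (rule sum_mono)
        fix j
        have "\<bar>t j - z j\<bar> \<le> 1" unfolding z_def using of_int_round_abs_le[of "t j"] by linarith
        then show "\<bar>(t j - z j) * G j i\<bar> \<le> \<bar>G j i\<bar>"
          by (simp add: abs_mult mult_left_le_one_le)
      qed
      finally show "\<bar>vdiff n x l i\<bar> \<le> (\<Sum>j<n. \<bar>G j i\<bar>)" .
    qed
    finally show ?thesis using lL by blast
  qed
  have "1 / K > 0" using K by simp
  then show ?thesis using disc bnd by blast
qed

lemma vnorm_uminus: "vnorm n (\<lambda>i. - y i) = vnorm n y"
  unfolding vnorm_def by simp

lemma voronoi_props:
  assumes lat: "is_lattice n L" and vor: "voronoi_region n L V"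
  shows "V \<in> sets (Rn n)" "emeasure (Rn n) V \<noteq> 0" "emeasure (Rn n) V \<noteq> \<infinity>"
    "\<exists>R. \<forall>x\<in>V. vnorm n x \<le> R"
proof -
  interpret product_sigma_finite "\<lambda>_. lborel :: real measure" by standard
  show Vs: "V \<in> sets (Rn n)" using vor unfolding voronoi_region_def by blast
  obtain lam where lam: "lam > 0" "\<forall>l\<in>L - {\<lambda>i\<in>{..<n}. 0}. vnorm n l \<ge> lam"
    using lattice_props[OF lat] by blast
  obtain R where R: "\<forall>x\<in>space (Rn n). \<exists>l\<in>L. vnorm n (vdiff n x l) \<le> R"
    using lattice_props[OF lat] by blast
  have Vsub: "V \<subseteq> {x \<in> space (Rn n). \<forall>l\<in>L. vnorm n x \<le> vnorm n (vdiff n x l)}"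
    using vor unfolding voronoi_region_def by blast
  have VR: "\<forall>x\<in>V. vnorm n x \<le> R"
  proof
    fix x assume x: "x \<in> V"
    then have xs: "x \<in> space (Rn n)" using Vsub by blast
    obtain l where "l \<in> L" "vnorm n (vdiff n x l) \<le> R" using R xs by blast
    then show "vnorm n x \<le> R" using Vsub x by force
  qed
  then show "\<exists>R. \<forall>x\<in>V. vnorm n x \<le> R" by blast
  have Vsup: "{x \<in> space (Rn n). \<forall>l\<in>L - {\<lambda>i\<in>{..<n}. 0}. vnorm n x < vnorm n (vdiff n x l)} \<subseteq> V"
    using vor unfolding voronoi_region_def by blast
  define b where "b = lam / (2 * (real n + 1))"
  have b: "b > 0" using lam by (simp add: b_def)
  have boxsub: "PiE {..<n} (\<lambda>_. {-b<..<b}) \<subseteq> V"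
  proof
    fix x assume x: "x \<in> PiE {..<n} (\<lambda>_. {-b<..<b})"
    have xs: "x \<in> space (Rn n)" using x unfolding space_Rn by (auto simp: PiE_def Pi_def)
    have "vnorm n x \<le> (\<Sum>i<n. \<bar>x i\<bar>)" by (rule vnorm_le_sum_abs)
    also have "\<dots> \<le> (\<Sum>i<n. b)" using x by (intro sum_mono) (auto simp: PiE_def Pi_def abs_less_iff less_imp_le)
    also have "\<dots> = real n * b" by simp
    also have "\<dots> < lam / 2" using lam unfolding b_def by (simp add: field_simps)
    finally have xl: "vnorm n x < lam / 2" .
    have "vnorm n x < vnorm n (vdiff n x l)" if l: "l \<in> L - {\<lambda>i\<in>{..<n}. 0}" for l
    proof -
      have "vnorm n l = vnorm n (\<lambda>i. x i + (- vdiff n x l i))"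
        by (rule vnorm_cong) (simp add: vdiff_def)
      also have "\<dots> \<le> vnorm n x + vnorm n (\<lambda>i. - vdiff n x l i)" by (rule vnorm_triangle)
      also have "vnorm n (\<lambda>i. - vdiff n x l i) = vnorm n (vdiff n x l)" by (rule vnorm_uminus)
      finally have "vnorm n l \<le> vnorm n x + vnorm n (vdiff n x l)" .
      moreover have "lam \<le> vnorm n l" using lam(2) l by blast
      ultimately show ?thesis using xl by linarith
    qed
    then show "x \<in> V" using Vsup xs by blast
  qed
  have "emeasure (Rn n) (PiE {..<n} (\<lambda>_. {-b<..<b})) = (\<Prod>i<n. emeasure lborel {-b<..<b})"
    unfolding Rn_def by (rule emeasure_PiM) auto
  also have "\<dots> = ennreal (2 * b) ^ n"
    using b by simp
  also have "\<dots> = ennreal ((2 * b) ^ n)"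
    using b by (intro ennreal_power) simp
  finally have "emeasure (Rn n) (PiE {..<n} (\<lambda>_. {-b<..<b})) > 0" using b by simp
  moreover have "emeasure (Rn n) (PiE {..<n} (\<lambda>_. {-b<..<b})) \<le> emeasure (Rn n) V"
    using boxsub Vs by (rule emeasure_mono)
  ultimately show "emeasure (Rn n) V \<noteq> 0" by auto
  define R' where "R' = max R 0"
  have Vbox: "V \<subseteq> PiE {..<n} (\<lambda>_. {-R'..R'})"
  proof
    fix x assume x: "x \<in> V"
    then have xs: "x \<in> space (Rn n)" using Vsub by blast
    have "\<bar>x i\<bar> \<le> R'" if "i < n" for i
      using comp_le_vnorm[OF that, of x] VR x unfolding R'_def by force
    then show "x \<in> PiE {..<n} (\<lambda>_. {-R'..R'})" using xs unfolding space_Rn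
      by (auto simp: PiE_def Pi_def abs_le_iff) (metis minus_le_iff)
  qed
  have "emeasure (Rn n) (PiE {..<n} (\<lambda>_. {-R'..R'})) = (\<Prod>i<n. emeasure lborel {-R'..R'})"
    unfolding Rn_def by (rule emeasure_PiM) auto
  also have "\<dots> = ennreal (2 * R') ^ n"
    unfolding R'_def by simp
  also have "\<dots> = ennreal ((2 * R') ^ n)"
    unfolding R'_def by (intro ennreal_power) simp
  finally have "emeasure (Rn n) (PiE {..<n} (\<lambda>_. {-R'..R'})) < \<infinity>" by simp
  moreover have "emeasure (Rn n) V \<le> emeasure (Rn n) (PiE {..<n} (\<lambda>_. {-R'..R'}))"
    using Vbox by (rule emeasure_mono) (simp add: Rn_def)
  ultimately show "emeasure (Rn n) V \<noteq> \<infinity>" by auto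
qed

lemma vnorm_gt_sqrt: "c \<ge> 0 \<Longrightarrow> (vnorm n x > sqrt c) \<longleftrightarrow> ((vnorm n x)\<^sup>2 > c)"
proof -
  have "sqrt ((vnorm n x)\<^sup>2) = vnorm n x" using vnorm_nonneg[of n x] by simp
  then show ?thesis by (metis real_sqrt_less_iff)
qed

lemma main_step:
  fixes n :: nat and v E g eta delta eps :: real and P :: "(nat \<Rightarrow> real) measure" and V :: "(nat \<Rightarrow> real) set"
  assumes n: "n > 0" and vdef: "v = measure (Rn n) V"
    and Vs: "V \<in> sets (Rn n)" and Vpos: "emeasure (Rn n) V \<noteq> 0" and Vfin: "emeasure (Rn n) V \<noteq> \<infinity>"
    and Pdef: "P = uniform_measure (Rn n) V"
    and int: "integrable P (\<lambda>x. (vnorm n x)\<^sup>2)"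
    and Edef: "E = (\<integral>x. (vnorm n x)\<^sup>2 \<partial>P)"
    and Eg: "E = g * (n * v powr (2 / n) / (2 * pi * exp 1))"
    and eta: "0 < eta" "eta \<le> 1/2" and delta: "delta > 0" and eps: "eps > 0"
    and H: "(1 + delta) * g - (1 - eta) > 0"
    and F: "((1 + delta) * g - (1 - eta)) * eps - (g - (1 - eta) * (1 - (1 - eta) powr (n / 2))) > 0"
  shows "measure P {x \<in> space (Rn n). (vnorm n x)\<^sup>2 > (1 + delta) * E} \<le> eps"
proof (rule ccontr)
  assume contra: "\<not> ?thesis"
  interpret P: prob_space P unfolding Pdef by (rule prob_space_uniform_measure[OF Vpos Vfin])
  have vpos: "v > 0" using Vpos Vfin unfolding vdef
    by (simp add: emeasure_eq_ennreal_measure measure_nonneg order.not_eq_order_implies_strict)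
  define r2 where "r2 = n * v powr (2 / n) / (2 * pi * exp 1)"
  have r2: "r2 > 0" using n vpos by (simp add: r2_def)
  have Er: "E = g * r2" using Eg unfolding r2_def .
  define a where "a = (1 - eta) * r2"
  have a: "a > 0" using r2 eta by (simp add: a_def)
  define q where "q = (1 - eta) powr (n / 2)"
  have q: "q \<ge> 0" by (simp add: q_def)
  define A where "A = {x \<in> space (Rn n). (vnorm n x)\<^sup>2 > (1 + delta) * E}"
  define B where "B = {x \<in> space (Rn n). (vnorm n x)\<^sup>2 \<le> a}"
  have spP: "space P = space (Rn n)" unfolding Pdef by simp
  have setsP: "sets P = sets (Rn n)" unfolding Pdef by simp
  have As: "A \<in> sets (Rn n)" unfolding A_def by measurable
  have Bs: "B \<in> sets (Rn n)" unfolding B_def by measurable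
  define p where "p = measure P A"
  define tau where "tau = measure P B"
  have bb: "(2 * pi * exp 1 * a / n) powr (n / 2) = q * v"
  proof -
    have "2 * pi * exp 1 * a / n = (1 - eta) * v powr (2 / n)"
      using n unfolding a_def r2_def by (simp add: field_simps)
    then have "(2 * pi * exp 1 * a / n) powr (n / 2) = (1 - eta) powr (n / 2) * (v powr (2 / n)) powr (n / 2)"
      using eta by (simp add: powr_mult)
    also have "(v powr (2 / n)) powr (n / 2) = v" using n vpos by (simp add: powr_powr)
    finally show ?thesis unfolding q_def .
  qed
  have "emeasure (Rn n) (V \<inter> B) \<le> emeasure (Rn n) B" using Bs by (intro emeasure_mono) auto
  also have "\<dots> \<le> ennreal (q * v)" unfolding B_def using ball_bound[OF a n] bb by simp
  finally have "measure (Rn n) (V \<inter> B) \<le> q * v"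
    unfolding measure_def using q vpos by (intro enn2real_leI) auto
  then have tau: "tau \<le> q"
    unfolding tau_def Pdef using vpos Bs Vpos Vfin
    by (simp add: vdef[symmetric] field_simps)
  have Bc: "measure P (space P - B) = 1 - tau"
    unfolding tau_def using Bs setsP by (intro P.prob_compl) simp
  define c where "c = (1 + delta) * E - a"
  have pw: "(vnorm n x)\<^sup>2 \<ge> a * indicator (space P - B) x + c * indicator A x" if x: "x \<in> space P" for x
    using x a unfolding A_def B_def c_def spP
    by (auto simp: indicator_def)
  have iB: "integrable P (\<lambda>x. a * indicator (space P - B) x :: real)"
    using Bs setsP by (intro integrable_mult_right integrable_real_indicator) (auto simp: less_top[symmetric])
  have iA: "integrable P (\<lambda>x. c * indicator A x :: real)"
    using As setsP by (intro integrable_mult_right integrable_real_indicator) (auto simp: less_top[symmetric])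
  have "(\<integral>x. a * indicator (space P - B) x + c * indicator A x \<partial>P) \<le> E"
    unfolding Edef using pw by (intro integral_mono) (auto intro: iA iB int)
  moreover have "(\<integral>x. a * indicator (space P - B) x + c * indicator A x \<partial>P) = a * (1 - tau) + c * p"
    using iA iB Bc As setsP spP unfolding p_def
    by (simp add: Bochner_Integration.integral_add sets.Int_space_eq2 Int_absorb2 Diff_subset)
  ultimately have ineq: "a * (1 - tau) + c * p \<le> E" by simp
  have cpos: "c = r2 * ((1 + delta) * g - (1 - eta))"
    unfolding c_def Er a_def by (simp add: algebra_simps)
  have "c > 0" using cpos r2 H by simp
  moreover have "p > eps" using contra unfolding p_def A_def by simp
  ultimately have "c * eps < c * p" by simp
  moreover have "a * (1 - q) \<le> a * (1 - tau)" using tau a by simp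
  ultimately have lt: "a * (1 - q) + c * eps < E" using ineq by linarith
  have "E - a * (1 - q) - c * eps = - r2 * (((1 + delta) * g - (1 - eta)) * eps - (g - (1 - eta) * (1 - q)))"
    unfolding cpos a_def Er by (simp add: algebra_simps)
  moreover have "r2 * (((1 + delta) * g - (1 - eta)) * eps - (g - (1 - eta) * (1 - q))) > 0"
    using r2 F unfolding q_def by simp
  ultimately show False using lt by linarith
qed

theorem proposition2:
  fixes L V :: "nat \<Rightarrow> (nat \<Rightarrow> real) set"
  assumes "\<And>n. is_lattice n (L n)"
    and "\<And>n. voronoi_region n (L n) (V n)"
    and "good_for_MSE V"
  shows "semi_norm_ergodic (\<lambda>n. uniform_measure (Rn n) (V n))"
proof -
  define P where "P n = uniform_measure (Rn n) (V n)" for n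
  have Vs: "V n \<in> sets (Rn n)" for n using voronoi_props[OF assms(1,2)] by blast
  have Vpos: "emeasure (Rn n) (V n) \<noteq> 0" for n using voronoi_props[OF assms(1,2)] by blast
  have Vfin: "emeasure (Rn n) (V n) \<noteq> \<infinity>" for n using voronoi_props[OF assms(1,2)] by blast
  have ps: "prob_space (P n)" for n unfolding P_def by (rule prob_space_uniform_measure[OF Vpos Vfin])
  have int: "integrable (P n) (\<lambda>x. (vnorm n x)\<^sup>2)" for n
  proof -
    interpret prob_space "P n" by (rule ps)
    obtain R where R: "\<forall>x\<in>V n. vnorm n x \<le> R" using voronoi_props[OF assms(1,2)] by blast
    have "AE x in P n. norm ((vnorm n x)\<^sup>2) \<le> R\<^sup>2"
      unfolding P_def
    proof (rule AE_uniform_measureI[OF Vs], rule AE_I2, intro impI)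
      fix x assume "x \<in> V n"
      then have "vnorm n x \<le> R" using R by blast
      then show "norm ((vnorm n x)\<^sup>2) \<le> R\<^sup>2" using vnorm_nonneg[of n x]
        by (simp add: power_mono)
    qed
    moreover have "(\<lambda>x. (vnorm n x)\<^sup>2) \<in> borel_measurable (P n)"
      unfolding P_def by measurable
    ultimately show ?thesis by (rule integrable_const_bound)
  qed
  have part1: "\<forall>n. prob_space (P n) \<and> sets (P n) = sets (Rn n) \<and> integrable (P n) (\<lambda>x. (vnorm n x)\<^sup>2)"
    using ps int by (simp add: P_def)
  define v where "v n = measure (Rn n) (V n)" for n
  have vpos: "v n > 0" for n using Vpos[of n] Vfin[of n] unfolding v_def
    by (simp add: emeasure_eq_ennreal_measure measure_nonneg order.not_eq_order_implies_strict)
  define E where "E n = (\<integral>x. (vnorm n x)\<^sup>2 \<partial>P n)" for n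
  define g where "g n = 2 * pi * exp 1 * NSM n (V n)" for n
  have gl: "g \<longlonglongrightarrow> 1"
  proof -
    have "(\<lambda>n. 2 * pi * exp 1 * NSM n (V n)) \<longlonglongrightarrow> 2 * pi * exp 1 * (1 / (2 * pi * exp 1))"
      using assms(3) unfolding good_for_MSE_def by (intro tendsto_mult_left)
    then show ?thesis unfolding g_def by simp
  qed
  have Eg: "E n = g n * (n * v n powr (2 / n) / (2 * pi * exp 1))" if n: "n > 0" for n
  proof -
    have "NSM n (V n) = (1 / real n) * E n / v n powr (2 / n)"
      unfolding NSM_def sigma2_def eff_var_def E_def P_def v_def vol_def by simp
    then show ?thesis unfolding g_def using n vpos[of n] by (simp add: field_simps)
  qed
  have part2: "eventually (\<lambda>n. measure (P n) {x \<in> space (P n).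
           vnorm n x > sqrt ((1 + delta) * real n * eff_var n (P n))} \<le> eps) sequentially"
    if eps: "eps > 0" and delta: "delta > 0" for eps delta
  proof -
    define eta where "eta = min (1/2) (delta * eps / 2)"
    have eta: "0 < eta" "eta \<le> 1/2" "eta \<le> delta * eps / 2"
      using eps delta by (auto simp: eta_def)
    have q0: "(\<lambda>n. (1 - eta) powr (real n / 2)) \<longlonglongrightarrow> 0"
    proof -
      have "(1 - eta) powr (1 / 2) < 1 powr (1 / 2)"
        using eta by (intro powr_less_mono2) auto
      then have "(\<lambda>n. ((1 - eta) powr (1 / 2)) ^ n) \<longlonglongrightarrow> 0"
        by (intro LIMSEQ_realpow_zero) auto
      moreover have "((1 - eta) powr (1 / 2)) ^ n = (1 - eta) powr (real n / 2)" for n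
        using eta by (simp add: powr_realpow[symmetric] powr_powr)
      ultimately show ?thesis by simp
    qed
    have Fl: "(\<lambda>n. ((1 + delta) * g n - (1 - eta)) * eps - (g n - (1 - eta) * (1 - (1 - eta) powr (n / 2))))
        \<longlonglongrightarrow> ((1 + delta) * 1 - (1 - eta)) * eps - (1 - (1 - eta) * (1 - 0))"
      by (intro tendsto_intros gl q0)
    have "((1 + delta) * 1 - (1 - eta)) * eps - (1 - (1 - eta) * (1 - 0)) > 0"
    proof -
      have "((1 + delta) * 1 - (1 - eta)) * eps - (1 - (1 - eta) * (1 - 0)) = delta * eps + eta * eps - eta"
        by (simp add: algebra_simps)
      moreover have "eta * eps \<ge> 0" using eta eps by simp
      ultimately show ?thesis using eta delta eps by linarith
    qed
    then have evF: "eventually (\<lambda>n. ((1 + delta) * g n - (1 - eta)) * eps - (g n - (1 - eta) * (1 - (1 - eta) powr (n / 2))) > 0) sequentially"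
      by (rule order_tendstoD(1)[OF Fl])
    have Hl: "(\<lambda>n. (1 + delta) * g n - (1 - eta)) \<longlonglongrightarrow> (1 + delta) * 1 - (1 - eta)"
      by (intro tendsto_intros gl)
    have "(1 + delta) * 1 - (1 - eta) > 0" using delta eta by simp
    then have evH: "eventually (\<lambda>n. (1 + delta) * g n - (1 - eta) > 0) sequentially"
      by (rule order_tendstoD(1)[OF Hl])
    have evn: "eventually (\<lambda>n. n > (0::nat)) sequentially" by (rule eventually_gt_at_top)
    show ?thesis
      using evF evH evn
    proof eventually_elim
      case (elim n)
      then have n: "n > 0" by simp
      have E0: "E n \<ge> 0" unfolding E_def by simp
      have ev: "real n * eff_var n (P n) = E n" unfolding eff_var_def E_def using n by simp
      have set_eq: "{x \<in> space (P n). vnorm n x > sqrt ((1 + delta) * real n * eff_var n (P n))}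
          = {x \<in> space (Rn n). (vnorm n x)\<^sup>2 > (1 + delta) * E n}"
      proof -
        have e1: "(1 + delta) * real n * eff_var n (P n) = (1 + delta) * E n"
          using ev by (simp add: mult.assoc)
        have e2: "(1 + delta) * E n \<ge> 0" using E0 delta by simp
        have sp: "space (P n) = space (Rn n)" unfolding P_def by simp
        show ?thesis unfolding e1 sp using vnorm_gt_sqrt[OF e2] by blast
      qed
      show ?case unfolding set_eq
        by (rule main_step[OF n v_def Vs Vpos Vfin P_def int E_def Eg[OF n] eta(1,2) delta eps elim(2) elim(1)])
    qed
  qed
  show ?thesis unfolding semi_norm_ergodic_def P_def[symmetric]
    using part1 part2 by blast
qed

end
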